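(* Let $\chi$ be a real measurable function on $[0,\infty)$ with $\chi(t)=1$ for $0\le t\le1$ and $0\le\chi(t)\le1$ for $t>1$. Suppose that $\int_T^\infty\chi(t)\,dt=0$ for some constant $T$, where $T=\min\{t:\int_t^\infty\chi(s)\,ds=0\}$ and $T>1$. Let $\sigma$ be the solution of $u\sigma(u)=\int_0^u\sigma(u-t)\chi(t)\,dt$ for $u>1$ with $\sigma(u)=1$ for $0\le u\le1$, and let $\xi(u)$ be the unique real solution of $u=\int_1^\infty\chi(v)e^{\xi(u)v}\,dv$. Then, as $u\to\infty$, $\xi(u)=\frac{\log u}{T}(1+o(1))$ and $$\sigma(u)=\exp\left(-\frac{u\log u}{T}(1+o(1))\right).$$ *)

theory Defs
  imports "HOL-Analysis.Analysis"
begin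

end

theory Submission
  imports Defs "HOL-Real_Asymp.Real_Asymp"
begin


lemma reflect_integrable:
  fixes f :: "real \<Rightarrow> real"
  shows "set_integrable lborel {a..b} (\<lambda>t. f (u - t)) \<longleftrightarrow> set_integrable lborel {u-b..u-a} f"
proof -
  have "set_integrable lborel {u-b..u-a} f \<longleftrightarrow>
     integrable lborel (\<lambda>x. (\<lambda>r. indicator {u-b..u-a} r *\<^sub>R f r) (u + (-1) * x))"
    unfolding set_integrable_def by (rule lborel_integrable_real_affine_iff[symmetric]) simp
  also have "(\<lambda>x. (\<lambda>r. indicator {u-b..u-a} r *\<^sub>R f r) (u + (-1) * x)) = (\<lambda>x. indicator {a..b} x *\<^sub>R f (u - x))"
    by (auto simp: indicator_def)
  finally show ?thesis unfolding set_integrable_def by simp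
qed

lemma reflect_integral:
  fixes f :: "real \<Rightarrow> real"
  shows "(LINT t:{a..b}|lborel. f (u - t)) = (LINT r:{u-b..u-a}|lborel. f r)"
proof -
  have "(LINT r:{u-b..u-a}|lborel. f r) = \<bar>-1\<bar> *\<^sub>R (\<integral>x. (\<lambda>r. indicator {u-b..u-a} r *\<^sub>R f r) (u + (-1) * x) \<partial>lborel)"
    unfolding set_lebesgue_integral_def by (rule lborel_integral_real_affine) simp
  also have "(\<lambda>x. (\<lambda>r. indicator {u-b..u-a} r *\<^sub>R f r) (u + (-1) * x)) = (\<lambda>x. indicator {a..b} x *\<^sub>R f (u - x))"
    by (auto simp: indicator_def)
  finally show ?thesis unfolding set_lebesgue_integral_def by simp
qed

lemma int_ind: "a \<le> b \<Longrightarrow> integral\<^sup>L lborel (\<lambda>t. indicator {a..b} t * (c::real)) = (b - a) * c"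
  by simp

lemma int_ind0: "integrable lborel (indicator {a..b::real} :: real \<Rightarrow> real)"
  apply (rule integrable_real_indicator)
  apply simp
  apply (simp add: emeasure_lborel_Icc_eq)
  done

lemma int_ind': "integrable lborel (\<lambda>t. indicator {a..b::real} t * (c::real))"
  using int_ind0[of a b] by simp

lemma LINT_def': "(LINT x:S|lborel. f x) = integral\<^sup>L lborel (\<lambda>x. indicator S x * (f x::real))"
  by (simp add: set_lebesgue_integral_def)

lemma set_int_def': "set_integrable lborel S f = integrable lborel (\<lambda>x. indicator S x * (f x::real))"
  by (simp add: set_integrable_def)

lemma mult_unit_bounds:
  fixes x c e :: real
  assumes "0 \<le> c" "c \<le> 1" "-e \<le> x" "x \<le> 1 + e" "0 \<le> e"
  shows "-e \<le> x * c \<and> x * c \<le> 1 + e"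
proof (cases "0 \<le> x")
  case True
  then have "0 \<le> x * c" "x * c \<le> x" using assms by (auto simp: mult_left_le)
  then show ?thesis using assms by linarith
next
  case False
  then have "x * c \<le> 0" "x \<le> x * c" using assms
    by (auto simp: mult_nonpos_nonneg)
  then show ?thesis using assms by linarith
qed

lemma lim_lo:
  fixes a c T b :: real assumes "a > 0" "c > 0" "T > 0"
  shows "((\<lambda>u. (b + (u/a+1) * ln ((u+a)/c)) * T / (u * ln u)) \<longlongrightarrow> inverse a * T) at_top"
  using assms by real_asymp

lemma lim_up:
  fixes e T :: real assumes "e > 0" "e < 1" "T > 0"
  shows "((\<lambda>u. ((1-e)*u/T - 1) * ln (e*u/T) * T / (u * ln u)) \<longlongrightarrow> 1 - e) at_top"
  using assms by real_asymp

lemma lim_xi1: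
  fixes k :: real
  shows "((\<lambda>u. (ln u - k) / ln u) \<longlongrightarrow> 1) at_top"
  by real_asymp

locale P3 =
  fixes chi sigma :: "real \<Rightarrow> real" and T :: real
  assumes chi_meas: "set_borel_measurable lborel {0..} chi"
    and chi_one: "\<And>t. 0 \<le> t \<Longrightarrow> t \<le> 1 \<Longrightarrow> chi t = 1"
    and chi_bounds: "\<And>t. t > 1 \<Longrightarrow> 0 \<le> chi t \<and> chi t \<le> 1"
    and T_gt: "T > 1"
    and T_zero: "(\<integral>\<^sup>+ s\<in>{T..}. ennreal (chi s) \<partial>lborel) = 0"
    and T_min: "\<And>t. 0 \<le> t \<Longrightarrow> (\<integral>\<^sup>+ s\<in>{t..}. ennreal (chi s) \<partial>lborel) = 0 \<Longrightarrow> T \<le> t"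
    and sigma_init: "\<And>u. 0 \<le> u \<Longrightarrow> u \<le> 1 \<Longrightarrow> sigma u = 1"
    and sigma_int: "\<And>u. u > 1 \<Longrightarrow> set_integrable lborel {0..u} (\<lambda>t. sigma (u - t) * chi t)"
    and sigma_eq: "\<And>u. u > 1 \<Longrightarrow> u * sigma u = (LINT t:{0..u}|lborel. sigma (u - t) * chi t)"
begin

lemma chi_nn: "0 \<le> t \<Longrightarrow> 0 \<le> chi t \<and> chi t \<le> 1"
  using chi_one chi_bounds by (cases "t \<le> 1") auto

lemma chi_meas0: "(\<lambda>t. indicator {0..} t * chi t) \<in> borel_measurable lborel"
  using chi_meas unfolding set_borel_measurable_def by simp

lemma chi_meas_sub:
  assumes "S \<subseteq> {0..}" "S \<in> sets borel"
  shows "(\<lambda>t. indicator S t * chi t) \<in> borel_measurable lborel"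
proof -
  have "(\<lambda>t. indicator S t * chi t) = (\<lambda>t. indicator S t * (indicator {0..} t * chi t))"
    using assms(1) by (intro ext) (auto simp: indicator_def)
  moreover have "(\<lambda>t. indicator S t * (indicator {0..} t * chi t)) \<in> borel_measurable lborel"
    using assms(2) by (intro borel_measurable_times[OF _ chi_meas0]) auto
  ultimately show ?thesis by simp
qed

lemma chi_int:
  assumes "0 \<le> a"
  shows "set_integrable lborel {a..b} chi"
  unfolding set_integrable_def
proof (rule Bochner_Integration.integrable_bound[where f="indicator {a..b} :: real \<Rightarrow> real"])
  show "integrable lborel (indicator {a..b} :: real \<Rightarrow> real)"
    by (intro integrable_real_indicator) (auto simp: emeasure_lborel_Icc_eq)
  show "(\<lambda>x. indicator {a..b} x *\<^sub>R chi x) \<in> borel_measurable lborel"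
    using chi_meas_sub[of "{a..b}"] assms by auto
  show "AE x in lborel. norm (indicator {a..b} x *\<^sub>R chi x) \<le> norm (indicator {a..b} x :: real)"
    using chi_nn assms by (auto simp: indicator_def)
qed

lemma chi_ae_zero: "AE t in lborel. T \<le> t \<longrightarrow> chi t = 0"
proof -
  have eq: "(\<lambda>s. ennreal (chi s) * indicator {T..} s) = (\<lambda>s. ennreal (indicator {T..} s * chi s))"
    by (intro ext) (auto simp: indicator_def)
  have "(\<lambda>s. indicator {T..} s * chi s) \<in> borel_measurable lborel"
    using T_gt by (intro chi_meas_sub) auto
  then have "AE s in lborel. ennreal (indicator {T..} s * chi s) = 0"
    using T_zero unfolding eq by (subst (asm) nn_integral_0_iff_AE) auto
  then show ?thesis
    apply (elim AE_mp)
    apply (intro AE_I2)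
    using T_gt chi_nn by (auto simp: indicator_def)
qed

lemma c_pos:
  assumes a: "0 \<le> a" "a < T"
  shows "0 < (LINT t:{a..T}|lborel. chi t)"
proof -
  have int: "integrable lborel (\<lambda>t. indicator {a..T} t * chi t)"
    using chi_int[OF a(1), of T] unfolding set_integrable_def by simp
  have nn: "AE t in lborel. 0 \<le> indicator {a..T} t * chi t"
    using a chi_nn by (intro AE_I2) (auto simp: indicator_def)
  have ge: "0 \<le> (LINT t:{a..T}|lborel. chi t)"
    unfolding set_lebesgue_integral_def using nn by (simp add: integral_nonneg_AE)
  have "(LINT t:{a..T}|lborel. chi t) \<noteq> 0"
  proof
    assume "(LINT t:{a..T}|lborel. chi t) = 0"
    then have "AE t in lborel. indicator {a..T} t * chi t = 0"
      using integral_nonneg_eq_0_iff_AE[OF int nn] unfolding set_lebesgue_integral_def by simp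
    then have ae: "AE s in lborel. ennreal (indicator {a..} s * chi s) = 0"
      using chi_ae_zero
      apply (elim AE_mp)
      apply (intro AE_I2)
      by (auto simp: indicator_def split: if_splits)
    have eq: "(\<lambda>s. ennreal (chi s) * indicator {a..} s) = (\<lambda>s. ennreal (indicator {a..} s * chi s))"
      by (intro ext) (auto simp: indicator_def)
    have "(\<lambda>s. indicator {a..} s * chi s) \<in> borel_measurable lborel"
      using a by (intro chi_meas_sub) auto
    then have "(\<integral>\<^sup>+ s\<in>{a..}. ennreal (chi s) \<partial>lborel) = 0"
      unfolding eq using ae by (subst nn_integral_0_iff_AE) auto
    then have "T \<le> a" using T_min a by simp
    then show False using a by simp
  qed
  then show ?thesis using ge by simp
qed

lemma sigma_loc_int:
  assumes "u > 1"
  shows "set_integrable lborel {u-1..u} sigma"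
proof -
  have "set_integrable lborel {0..1} (\<lambda>t. sigma (u - t) * chi t)"
    using assms by (intro set_integrable_subset[OF sigma_int[OF assms]]) auto
  then have "set_integrable lborel {0..1} (\<lambda>t. sigma (u - t))"
    by (subst (asm) set_integrable_cong[OF refl refl, where f'="\<lambda>t. sigma (u - t)"])
       (auto simp: chi_one)
  then show ?thesis using reflect_integrable[of 0 1 sigma u] by simp
qed

lemma bounds_step:
  assumes A: "1 \<le> A" and IH: "\<And>r. 0 \<le> r \<Longrightarrow> r \<le> A \<Longrightarrow> 0 \<le> sigma r \<and> sigma r \<le> 1"
  and u: "A < u" "u \<le> A + 1/2"
  shows "0 \<le> sigma u \<and> sigma u \<le> 1"
proof -
  define K where "K = 1 + (LINT r:{A-1/2..A+1/2}|lborel. \<bar>sigma r\<bar>)"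
  have intS: "set_integrable lborel {A-1/2..A+1/2} sigma"
    using sigma_loc_int[of "A+1/2"] A by simp
  then have intSa: "set_integrable lborel {A-1/2..A+1/2} (\<lambda>r. \<bar>sigma r\<bar>)"
    by (rule set_integrable_abs)
  have K1: "1 \<le> K"
    unfolding K_def LINT_def' by (simp add: integral_nonneg_AE)
  have base: "\<bar>sigma v\<bar> \<le> K" if v: "A < v" "v \<le> A + 1/2" for v
  proof -
    have v1: "v > 1" using v A by simp
    have intv: "integrable lborel (\<lambda>t. indicator {0..v} t * (sigma (v - t) * chi t))"
      using sigma_int[OF v1] by (simp add: set_int_def')
    have "set_integrable lborel {A..v} (\<lambda>r. \<bar>sigma r\<bar>)"
      using v by (intro set_integrable_subset[OF intSa]) auto
    then have int2: "set_integrable lborel {0..v-A} (\<lambda>t. \<bar>sigma (v - t)\<bar>)"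
      using reflect_integrable[of 0 "v-A" "\<lambda>r. \<bar>sigma r\<bar>" v] by simp
    have "v * \<bar>sigma v\<bar> = \<bar>integral\<^sup>L lborel (\<lambda>t. indicator {0..v} t * (sigma (v - t) * chi t))\<bar>"
    proof -
      have "v * \<bar>sigma v\<bar> = \<bar>v * sigma v\<bar>" using v1 by (simp add: abs_mult)
      then show ?thesis using sigma_eq[OF v1] by (simp add: LINT_def')
    qed
    also have "\<dots> \<le> integral\<^sup>L lborel (\<lambda>t. \<bar>indicator {0..v} t * (sigma (v - t) * chi t)\<bar>)"
      using integral_norm_bound[of lborel "\<lambda>t. indicator {0..v} t * (sigma (v - t) * chi t)"] by simp
    also have "\<dots> \<le> integral\<^sup>L lborel (\<lambda>t. indicator {0..v-A} t * \<bar>sigma (v - t)\<bar> + indicator {0..v} t * 1)"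
    proof (rule integral_mono)
      show "integrable lborel (\<lambda>t. \<bar>indicator {0..v} t * (sigma (v - t) * chi t)\<bar>)"
        using intv by simp
      show "integrable lborel (\<lambda>t. indicator {0..v-A} t * \<bar>sigma (v - t)\<bar> + indicator {0..v} t * 1)"
        using int2 int_ind'[of 0 v 1] by (intro Bochner_Integration.integrable_add) (auto simp: set_int_def')
      fix t
      show "\<bar>indicator {0..v} t * (sigma (v - t) * chi t)\<bar> \<le> indicator {0..v-A} t * \<bar>sigma (v - t)\<bar> + indicator {0..v} t * 1"
      proof (cases "0 \<le> t \<and> t \<le> v")
        case True
        then have c: "0 \<le> chi t" "chi t \<le> 1" using chi_nn by auto
        show ?thesis
        proof (cases "t \<le> v - A")
          case True
          have "\<bar>sigma (v - t) * chi t\<bar> \<le> \<bar>sigma (v - t)\<bar>"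
            using c by (simp add: abs_mult mult_left_le)
          then show ?thesis using True \<open>0 \<le> t \<and> t \<le> v\<close> by (simp add: indicator_def)
        next
          case False
          then have "0 \<le> sigma (v - t) \<and> sigma (v - t) \<le> 1" using IH[of "v - t"] \<open>0 \<le> t \<and> t \<le> v\<close> by auto
          then have "\<bar>sigma (v - t) * chi t\<bar> \<le> 1" using c by (simp add: abs_mult mult_le_one)
          then show ?thesis using False \<open>0 \<le> t \<and> t \<le> v\<close> by (simp add: indicator_def)
        qed
      qed (auto simp: indicator_def)
    qed
    also have "\<dots> = (LINT t:{0..v-A}|lborel. \<bar>sigma (v - t)\<bar>) + v"
      using int2 int_ind'[of 0 v 1] v1 by (subst Bochner_Integration.integral_add) (auto simp: set_int_def' LINT_def')
    also have "(LINT t:{0..v-A}|lborel. \<bar>sigma (v - t)\<bar>) = (LINT r:{A..v}|lborel. \<bar>sigma r\<bar>)"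
      using reflect_integral[of 0 "v-A" "\<lambda>r. \<bar>sigma r\<bar>" v] by simp
    also have "\<dots> \<le> K - 1"
      unfolding K_def LINT_def'
    proof (simp, rule integral_mono)
      show "integrable lborel (\<lambda>x. indicator {A..v} x * \<bar>sigma x\<bar>)"
        using \<open>set_integrable lborel {A..v} (\<lambda>r. \<bar>sigma r\<bar>)\<close> by (simp add: set_int_def')
      show "integrable lborel (\<lambda>x. indicator {A-1/2..A+1/2} x * \<bar>sigma x\<bar>)"
        using intSa by (simp add: set_int_def')
      fix x show "indicator {A..v} x * \<bar>sigma x\<bar> \<le> indicator {A-1/2..A+1/2} x * \<bar>sigma x\<bar>"
        using v by (auto simp: indicator_def)
    qed
    finally have "v * \<bar>sigma v\<bar> \<le> K - 1 + v" by simp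
    also have "\<dots> \<le> v * K" using K1 v1 mult_nonneg_nonneg[of "v-1" "K-1"]
      by (simp add: algebra_simps)
    finally show ?thesis using v1 by simp
  qed
  have kstep: "\<forall>v. A < v \<and> v \<le> A + 1/2 \<longrightarrow> -(K/2^k) \<le> sigma v \<and> sigma v \<le> 1 + K/2^k" for k
  proof (induction k)
    case 0
    show ?case
    proof (intro allI impI)
      fix v assume a: "A < v \<and> v \<le> A + 1/2"
      have "\<bar>sigma v\<bar> \<le> K" using base a by auto
      then have "sigma v \<le> K" "- sigma v \<le> K" by (auto simp: abs_le_iff)
      then show "-(K/2^0) \<le> sigma v \<and> sigma v \<le> 1 + K/2^0" by simp
    qed
  next
    case (Suc k)
    show ?case
    proof (intro allI impI)
      fix v assume v: "A < v \<and> v \<le> A + 1/2"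
      define e where "e = K / 2^k"
      have e0: "0 \<le> e" unfolding e_def using K1 by simp
      have v1: "v > 1" using v A by simp
      have intv: "integrable lborel (\<lambda>t. indicator {0..v} t * (sigma (v - t) * chi t))"
        using sigma_int[OF v1] by (simp add: set_int_def')
      have pt: "-e \<le> sigma (v - t) * chi t \<and> sigma (v - t) * chi t \<le> 1 + e
          \<and> (v - A < t \<longrightarrow> 0 \<le> sigma (v - t) * chi t \<and> sigma (v - t) * chi t \<le> 1)"
        if t: "0 \<le> t" "t \<le> v" for t
      proof -
        have c: "0 \<le> chi t" "chi t \<le> 1" using chi_nn t by auto
        have r: "-e \<le> sigma (v - t) \<and> sigma (v - t) \<le> 1 + e \<and> (v - t \<le> A \<longrightarrow> 0 \<le> sigma (v - t) \<and> sigma (v - t) \<le> 1)"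
        proof (cases "v - t \<le> A")
          case True
          then show ?thesis using IH[of "v - t"] t e0 by auto
        next
          case False
          then show ?thesis using Suc.IH v t unfolding e_def by auto
        qed
        show ?thesis
        proof (intro conjI impI)
          show "-e \<le> sigma (v - t) * chi t" "sigma (v - t) * chi t \<le> 1 + e"
            using mult_unit_bounds[OF c, of e "sigma (v - t)"] r e0 by auto
        next
          assume "v - A < t"
          then have "0 \<le> sigma (v - t) \<and> sigma (v - t) \<le> 1" using r by auto
          then show "0 \<le> sigma (v - t) * chi t" "sigma (v - t) * chi t \<le> 1"
            using c by (auto simp: mult_le_one)
        qed
      qed
      have "v * sigma v \<le> integral\<^sup>L lborel (\<lambda>t. indicator {0..v} t * 1 + indicator {0..v-A} t * e)"
        unfolding sigma_eq[OF v1] LINT_def'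
      proof (rule integral_mono)
        show "integrable lborel (\<lambda>t. indicator {0..v} t * 1 + indicator {0..v-A} t * e)"
          using int_ind' by (intro Bochner_Integration.integrable_add) auto
        fix t show "indicator {0..v} t * (sigma (v - t) * chi t) \<le> indicator {0..v} t * 1 + indicator {0..v-A} t * e"
          using pt[of t] e0 v by (auto simp: indicator_def)
      qed (fact intv)
      also have "\<dots> = v + (v - A) * e"
        using int_ind' v A by (subst Bochner_Integration.integral_add) auto
      finally have up: "v * sigma v \<le> v + (v - A) * e" .
      have "integral\<^sup>L lborel (\<lambda>t. indicator {0..v-A} t * (-e)) \<le> v * sigma v"
        unfolding sigma_eq[OF v1] LINT_def'
      proof (rule integral_mono)
        show "integrable lborel (\<lambda>t. indicator {0..v-A} t * (-e))"
          using int_ind' by auto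
        fix t show "indicator {0..v-A} t * (-e) \<le> indicator {0..v} t * (sigma (v - t) * chi t)"
          using pt[of t] e0 v by (auto simp: indicator_def)
      qed (fact intv)
      then have lo: "-((v - A) * e) \<le> v * sigma v" using v by simp
      have ve: "(v - A) * e \<le> e / 2" using v e0 mult_right_mono[of "v-A" "1/2" e] by simp
      have "(v - A) * e / v \<le> e / 2"
      proof -
        have "(v - A) * e / v \<le> (v - A) * e / 1"
          using v1 v e0 by (intro divide_left_mono) auto
        then show ?thesis using ve by linarith
      qed
      moreover have "sigma v \<le> 1 + (v - A) * e / v" using up v1 by (simp add: field_simps)
      moreover have "-((v - A) * e / v) \<le> sigma v" using lo v1 by (simp add: field_simps)
      ultimately show "-(K/2^Suc k) \<le> sigma v \<and> sigma v \<le> 1 + K/2^Suc k"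
        unfolding e_def by auto
    qed
  qed
  show ?thesis
  proof (rule ccontr)
    assume "\<not> ?thesis"
    then consider "sigma u < 0" | "sigma u > 1" by linarith
    then show False
    proof cases
      case 1
      obtain k :: nat where "K / (- sigma u) < 2 ^ k" using real_arch_pow[of 2] by auto
      then have "K / 2^k < - sigma u" using 1 by (simp add: field_simps)
      then show False using kstep[of k] u by auto
    next
      case 2
      obtain k :: nat where "K / (sigma u - 1) < 2 ^ k" using real_arch_pow[of 2] by auto
      then have "K / 2^k < sigma u - 1" using 2 by (simp add: field_simps)
      then show False using kstep[of k] u by auto
    qed
  qed
qed

lemma sigma_bounds:
  assumes "0 \<le> u" shows "0 \<le> sigma u \<and> sigma u \<le> 1"
proof -
  have "\<forall>r. 0 \<le> r \<and> r \<le> 1 + real n / 2 \<longrightarrow> 0 \<le> sigma r \<and> sigma r \<le> 1" for n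
  proof (induction n)
    case 0
    then show ?case using sigma_init by auto
  next
    case (Suc n)
    show ?case
    proof (intro allI impI)
      fix r assume r: "0 \<le> r \<and> r \<le> 1 + real (Suc n) / 2"
      show "0 \<le> sigma r \<and> sigma r \<le> 1"
      proof (cases "r \<le> 1 + real n / 2")
        case True
        then show ?thesis using Suc.IH r by auto
      next
        case False
        show ?thesis
          by (rule bounds_step[of "1 + real n / 2"]) (use Suc.IH r False in \<open>auto simp: field_simps\<close>)
      qed
    qed
  qed
  moreover have "u \<le> 1 + real (nat \<lceil>2 * u\<rceil>) / 2"
    using assms by linarith
  ultimately show ?thesis using assms by blast
qed

lemma upper_rec:
  assumes s: "s > 1" and M: "M \<ge> 0" and hyp: "\<And>r. 0 \<le> r \<Longrightarrow> s - T \<le> r \<Longrightarrow> r \<le> s \<Longrightarrow> sigma r \<le> M"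
  shows "s * sigma s \<le> M * T"
proof -
  have "s * sigma s \<le> integral\<^sup>L lborel (\<lambda>t. indicator {0..T} t * M)"
    unfolding sigma_eq[OF s] LINT_def'
  proof (rule integral_mono_AE)
    show "integrable lborel (\<lambda>t. indicator {0..s} t * (sigma (s - t) * chi t))"
      using sigma_int[OF s] by (simp add: set_int_def')
    show "integrable lborel (\<lambda>t. indicator {0..T} t * M)" by (rule int_ind')
    show "AE t in lborel. indicator {0..s} t * (sigma (s - t) * chi t) \<le> indicator {0..T} t * M"
      using chi_ae_zero
    proof (elim AE_mp, intro AE_I2 impI)
      fix t assume z: "T \<le> t \<longrightarrow> chi t = 0"
      show "indicator {0..s} t * (sigma (s - t) * chi t) \<le> indicator {0..T} t * M"
      proof (cases "0 \<le> t \<and> t \<le> s")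
        case True
        have c: "0 \<le> chi t" "chi t \<le> 1" using chi_nn True by auto
        have sb: "0 \<le> sigma (s - t)" using sigma_bounds True by auto
        show ?thesis
        proof (cases "t \<le> T")
          case True
          have "sigma (s - t) \<le> M" using hyp[of "s - t"] True \<open>0 \<le> t \<and> t \<le> s\<close> by auto
          moreover have "sigma (s - t) * chi t \<le> sigma (s - t)" using c sb by (simp add: mult_left_le)
          ultimately show ?thesis using True \<open>0 \<le> t \<and> t \<le> s\<close> by (simp add: indicator_def)
        next
          case False
          then show ?thesis using z M by (simp add: indicator_def)
        qed
      qed (use M in \<open>auto simp: indicator_def\<close>)
    qed
  qed
  also have "\<dots> = M * T" using T_gt by simp
  finally show ?thesis .
qed

lemma lower_rec:
  assumes s: "s > 1" and ab: "0 \<le> a" "a \<le> b" "b \<le> s"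
    and hyp: "\<And>r. 0 \<le> r \<Longrightarrow> r \<le> s - a \<Longrightarrow> L \<le> sigma r"
  shows "L * (LINT t:{a..b}|lborel. chi t) \<le> s * sigma s"
proof -
  have "L * (LINT t:{a..b}|lborel. chi t) = integral\<^sup>L lborel (\<lambda>t. indicator {a..b} t * (L * chi t))"
    unfolding LINT_def' by (simp add: mult.assoc mult.left_commute)
  also have "\<dots> \<le> s * sigma s"
    unfolding sigma_eq[OF s] LINT_def'
  proof (rule integral_mono)
    show "integrable lborel (\<lambda>t. indicator {0..s} t * (sigma (s - t) * chi t))"
      using sigma_int[OF s] by (simp add: set_int_def')
    show "integrable lborel (\<lambda>t. indicator {a..b} t * (L * chi t))"
      using chi_int[OF ab(1), of b] unfolding set_int_def'
      by (metis (no_types, lifting) ext integrable_mult_right mult.left_commute)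
    fix t
    show "indicator {a..b} t * (L * chi t) \<le> indicator {0..s} t * (sigma (s - t) * chi t)"
    proof (cases "0 \<le> t \<and> t \<le> s")
      case True
      have c: "0 \<le> chi t" using chi_nn True by auto
      have sb: "0 \<le> sigma (s - t)" using sigma_bounds True by auto
      show ?thesis
      proof (cases "a \<le> t \<and> t \<le> b")
        case True
        have "L \<le> sigma (s - t)" using hyp[of "s - t"] True ab \<open>0 \<le> t \<and> t \<le> s\<close> by auto
        then have "L * chi t \<le> sigma (s - t) * chi t" using c by (rule mult_right_mono)
        then show ?thesis using True \<open>0 \<le> t \<and> t \<le> s\<close> by (simp add: indicator_def)
      next
        case False
        then show ?thesis using True c sb by (auto simp: indicator_def)
      qed
    next
      case False
      then show ?thesis using ab by (auto simp: indicator_def)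
    qed
  qed
  finally show ?thesis .
qed

lemma upper_iter:
  assumes "y > 0" "x - real n * T \<ge> y" "s \<ge> x"
  shows "sigma s \<le> (T / y) ^ n"
  using assms
proof (induction n arbitrary: x s)
  case 0
  then show ?case using sigma_bounds[of s] by simp
next
  case (Suc n)
  have Tn: "T * real n \<ge> 0" using T_gt by simp
  have e: "real (Suc n) * T = T + T * real n" by (simp add: algebra_simps)
  have s1: "s > 1" using Suc.prems T_gt Tn e by linarith
  have sy: "s \<ge> y" using Suc.prems T_gt Tn e by linarith
  have M: "(T / y) ^ n \<ge> 0" using Suc.prems T_gt by simp
  have "s * sigma s \<le> (T / y) ^ n * T"
  proof (rule upper_rec[OF s1 M])
    fix r assume r: "0 \<le> r" "s - T \<le> r" "r \<le> s"
    show "sigma r \<le> (T / y) ^ n"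
      by (rule Suc.IH[of "x - T"]) (use Suc.prems r in \<open>auto simp: algebra_simps\<close>)
  qed
  then have "sigma s \<le> (T / y) ^ n * T / s" using s1 by (subst pos_le_divide_eq) (auto simp: mult.commute)
  also have "\<dots> \<le> (T / y) ^ n * T / y"
    using sy Suc.prems T_gt M by (intro divide_left_mono) auto
  also have "\<dots> = (T / y) ^ Suc n" by simp
  finally show ?case .
qed

lemma chi_int_le:
  assumes "0 \<le> a" "a \<le> b"
  shows "(LINT t:{a..b}|lborel. chi t) \<le> b - a"
proof -
  have "(LINT t:{a..b}|lborel. chi t) \<le> integral\<^sup>L lborel (\<lambda>t. indicator {a..b} t * 1)"
    unfolding LINT_def'
  proof (rule integral_mono)
    show "integrable lborel (\<lambda>t. indicator {a..b} t * chi t)"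
      using chi_int[OF assms(1), of b] by (simp add: set_int_def')
    show "integrable lborel (\<lambda>t. indicator {a..b} t * (1::real))" by (rule int_ind')
    fix t show "indicator {a..b} t * chi t \<le> indicator {a..b} t * 1"
      using chi_nn[of t] assms by (auto simp: indicator_def)
  qed
  also have "\<dots> = b - a" using assms by simp
  finally show ?thesis .
qed

lemma lower_iter:
  assumes a: "0 < a" "a \<le> b" "b \<le> U" "1 \<le> U"
    and c: "c = (LINT t:{a..b}|lborel. chi t)" "0 < c"
    and beta: "0 \<le> beta" "\<And>r. 0 \<le> r \<Longrightarrow> r \<le> U \<Longrightarrow> beta \<le> sigma r"
  shows "0 \<le> s \<Longrightarrow> s \<le> U + real n * a \<Longrightarrow> beta * (c / (U + real n * a)) ^ n \<le> sigma s"
proof (induction n arbitrary: s)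
  case 0
  then show ?case using beta by simp
next
  case (Suc n)
  define q where "q = (\<lambda>m::nat. c / (U + real m * a))"
  have cU: "c \<le> U" using chi_int_le[of a b] a c by simp
  have Upos: "0 < U + real m * a" for m using a mult_nonneg_nonneg[of "real m" a] by linarith
  have qpos: "0 < q m" for m unfolding q_def using c Upos by (intro divide_pos_pos) auto
  have qle1: "q m \<le> 1" for m unfolding q_def
    by (subst divide_le_eq_1_pos[OF Upos]) (use cU a mult_nonneg_nonneg[of "real m" a] in linarith)
  have qmono: "q (Suc n) \<le> q n" unfolding q_def using a c
    by (intro divide_left_mono) (auto simp: algebra_simps intro!: mult_pos_pos add_pos_nonneg)
  have pw: "q (Suc n) ^ Suc n \<le> q n ^ n"
  proof -
    have "q (Suc n) ^ Suc n \<le> q (Suc n) ^ n"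
      using qpos qle1 by (intro power_decreasing) (auto simp: less_imp_le)
    also have "\<dots> \<le> q n ^ n" using qmono qpos by (intro power_mono) (auto simp: less_imp_le)
    finally show ?thesis .
  qed
  show ?case
  proof (cases "s \<le> U + real n * a")
    case True
    then have "beta * q n ^ n \<le> sigma s" using Suc.IH Suc.prems unfolding q_def by auto
    moreover have "beta * q (Suc n) ^ Suc n \<le> beta * q n ^ n" using pw beta by (simp add: mult_left_mono)
    ultimately show ?thesis unfolding q_def by simp
  next
    case False
    have na: "0 \<le> real n * a" using a by simp
    have sa: "real (Suc n) * a = a + real n * a" by (simp add: algebra_simps)
    have s1: "s > 1" using False a na by linarith
    have "beta * q n ^ n * (LINT t:{a..b}|lborel. chi t) \<le> s * sigma s"
    proof (rule lower_rec[OF s1])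
      show "0 \<le> a" "a \<le> b" "b \<le> s" using False a na by linarith+
      fix r assume r: "0 \<le> r" "r \<le> s - a"
      show "beta * q n ^ n \<le> sigma r" unfolding q_def
        by (rule Suc.IH) (use r Suc.prems sa in linarith)+
    qed
    then have "beta * q n ^ n * c \<le> s * sigma s" using c by simp
    then have "beta * q n ^ n * c / s \<le> sigma s" using s1 by (subst pos_divide_le_eq) (auto simp: mult.commute)
    moreover have "beta * q n ^ n * c / (U + real (Suc n) * a) \<le> beta * q n ^ n * c / s"
      using Suc.prems s1 beta qpos c by (intro divide_left_mono mult_nonneg_nonneg) (auto simp: less_imp_le)
    moreover have "beta * q n ^ n * c / (U + real (Suc n) * a) = beta * q n ^ n * q (Suc n)"
      unfolding q_def by simp
    moreover have "beta * q (Suc n) ^ Suc n \<le> beta * q n ^ n * q (Suc n)"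
    proof -
      have "q (Suc n) ^ Suc n = q (Suc n) ^ n * q (Suc n)" by (simp add: mult.commute)
      also have "\<dots> \<le> q n ^ n * q (Suc n)"
        using qmono qpos by (intro mult_right_mono power_mono) (auto simp: less_imp_le)
      finally show ?thesis using beta by (simp add: mult_left_mono mult.assoc)
    qed
    ultimately show ?thesis unfolding q_def by linarith
  qed
qed

lemma sigma_base:
  assumes "0 \<le> U"
  obtains beta where "beta > 0" "\<And>r. 0 \<le> r \<Longrightarrow> r \<le> U \<Longrightarrow> beta \<le> sigma r"
proof -
  have c: "(LINT t:{1/2..1}|lborel. chi t) = 1/2"
  proof -
    have "(LINT t:{1/2..1}|lborel. chi t) = (LINT t:{(1::real)/2..1}|lborel. (1::real))"
      by (rule set_lebesgue_integral_cong) (auto simp: chi_one)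
    also have "\<dots> = 1/2" unfolding LINT_def' using int_ind[of "1/2" 1 1] by simp
    finally show ?thesis .
  qed
  define N where "N = nat \<lceil>2 * U\<rceil>"
  define beta where "beta = (1/2 / (1 + real N * (1/2))) ^ N"
  have bpos: "beta > 0" unfolding beta_def by (intro zero_less_power divide_pos_pos) auto
  have "beta \<le> sigma r" if r: "0 \<le> r" "r \<le> U" for r
  proof -
    have "1 * (1/2 / (1 + real N * (1/2))) ^ N \<le> sigma r"
    proof (rule lower_iter[where b=1])
      show "(1/2::real) = (LINT t:{1/2..1}|lborel. chi t)" using c by simp
      show "r \<le> 1 + real N * (1/2)" unfolding N_def using r by linarith
    qed (use r sigma_init in auto)
    then show ?thesis unfolding beta_def by simp
  qed
  then show ?thesis using that bpos by blast
qed

lemma sigma_pos: "0 \<le> u \<Longrightarrow> 0 < sigma u"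
  using sigma_base[of u] by (metis order.refl order_less_le_trans)

lemma sigma_up_asym:
  assumes e: "0 < e" "e < 1"
  shows "eventually (\<lambda>x. ((1-e)*x/T - 1) * ln (e*x/T) \<le> - ln (sigma x)) at_top"
  using eventually_gt_at_top[of "T/e"]
proof eventually_elim
  case (elim x)
  have xT: "e * x > T" using elim e by (simp add: field_simps)
  have x0: "x > 0" using xT e T_gt by (smt (verit) mult_le_cancel_left1 mult_nonneg_nonpos)
  define n where "n = nat \<lfloor>(1-e)*x/T\<rfloor>"
  have q0: "0 \<le> (1-e)*x/T" using e x0 T_gt by simp
  have n1: "real n \<le> (1-e)*x/T" unfolding n_def using q0 by linarith
  have n2: "(1-e)*x/T - 1 \<le> real n" unfolding n_def using q0 by linarith
  have "real n * T \<le> (1-e)*x" using n1 T_gt by (simp add: pos_le_divide_eq)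
  then have "x - real n * T \<ge> e * x" by (simp add: algebra_simps)
  then have "sigma x \<le> (T / (e*x)) ^ n"
    using upper_iter[of "e*x" x n x] e x0 by simp
  moreover have sp: "0 < sigma x" using sigma_pos x0 by simp
  ultimately have "ln (sigma x) \<le> ln ((T / (e*x)) ^ n)"
    using T_gt by (subst ln_le_cancel_iff) auto
  also have "\<dots> = real n * ln (T / (e*x))" using T_gt e x0 by (simp add: ln_realpow)
  also have "ln (T / (e*x)) = - ln (e*x/T)" using T_gt e x0 by (simp add: ln_div)
  finally have "real n * ln (e*x/T) \<le> - ln (sigma x)" by simp
  moreover have "0 \<le> ln (e*x/T)" using xT T_gt by simp
  ultimately show ?case using n2 mult_right_mono[OF n2 \<open>0 \<le> ln (e*x/T)\<close>] by linarith
qed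

lemma sigma_lo_asym:
  assumes d: "0 < d" "d < T"
  obtains beta c where "beta > 0" "c > 0"
    "eventually (\<lambda>s. - ln (sigma s) \<le> - ln beta + (s/(T-d) + 1) * ln ((s + (T-d))/c)) at_top"
proof -
  define a where "a = T - d"
  define c where "c = (LINT t:{a..T}|lborel. chi t)"
  have a: "0 < a" "a \<le> T" unfolding a_def using d by auto
  have cpos: "0 < c" unfolding c_def using c_pos[of a] a d unfolding a_def by auto
  have cle: "c \<le> T - a" unfolding c_def using chi_int_le[of a T] a by simp
  obtain beta where b: "beta > 0" "\<And>r. 0 \<le> r \<Longrightarrow> r \<le> T \<Longrightarrow> beta \<le> sigma r"
    using sigma_base[of T] T_gt by auto
  have "eventually (\<lambda>s. - ln (sigma s) \<le> - ln beta + (s/a + 1) * ln ((s + a)/c)) at_top"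
    using eventually_ge_at_top[of T]
  proof eventually_elim
    case (elim s)
    define n where "n = nat \<lceil>(s-T)/a\<rceil>"
    have q0: "0 \<le> (s-T)/a" using elim a by simp
    have n1: "(s-T)/a \<le> real n" unfolding n_def by linarith
    have n2: "real n < (s-T)/a + 1" unfolding n_def using q0 by linarith
    have s1: "s \<le> T + real n * a" using n1 a by (simp add: pos_divide_le_eq algebra_simps)
    have "real n * a < ((s-T)/a + 1) * a" using mult_strict_right_mono[OF n2 a(1)] .
    moreover have "((s-T)/a + 1) * a = s - T + a" using a by (simp add: field_simps)
    ultimately have s2: "T + real n * a \<le> s + a" by linarith
    have s0: "0 < s" using elim T_gt by simp
    have le: "beta * (c / (T + real n * a)) ^ n \<le> sigma s"
      by (rule lower_iter[of a T T c beta s n]) (use a cpos b s1 s0 T_gt c_def in auto)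
    have Tna: "0 < T + real n * a" using a T_gt by (simp add: add_pos_nonneg)
    have "(c / (s + a)) ^ n \<le> (c / (T + real n * a)) ^ n"
      using cpos Tna s2 a s0 by (intro power_mono divide_left_mono) auto
    then have le2: "beta * (c / (s + a)) ^ n \<le> sigma s" using le b by (smt (verit) mult_left_mono)
    have pos: "0 < beta * (c / (s + a)) ^ n" using b cpos a s0 by simp
    have "ln (beta * (c / (s + a)) ^ n) \<le> ln (sigma s)"
      using le2 pos by (subst ln_le_cancel_iff) auto
    moreover have "ln (beta * (c / (s + a)) ^ n) = ln beta - real n * ln ((s + a) / c)"
      using b cpos a s0 by (simp add: ln_mult ln_realpow ln_div algebra_simps)
    ultimately have A: "- ln (sigma s) \<le> - ln beta + real n * ln ((s + a) / c)" by simp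
    have "1 \<le> (s + a) / c" using cle cpos elim a by simp
    then have L0: "0 \<le> ln ((s + a) / c)" by simp
    have "real n \<le> s/a + 1" using n2 a T_gt by (smt (verit) divide_right_mono)
    then have "real n * ln ((s + a) / c) \<le> (s/a + 1) * ln ((s + a) / c)"
      using L0 by (rule mult_right_mono)
    then show ?case using A by linarith
  qed
  then show ?thesis using that[OF b(1) cpos] unfolding a_def by blast
qed

lemma sigma_limit: "((\<lambda>u. - ln (sigma u) * T / (u * ln u)) \<longlongrightarrow> 1) at_top"
proof (rule order_tendstoI)
  fix a :: real assume a: "a < 1"
  define e where "e = min (1/2) ((1 - a)/2)"
  have e: "0 < e" "e < 1" "a < 1 - e" unfolding e_def using a by (auto simp: min_def field_simps)
  have "eventually (\<lambda>u. a < ((1-e)*u/T - 1) * ln (e*u/T) * T / (u * ln u)) at_top"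
    using lim_up[OF e(1,2)] T_gt e(3) by (intro order_tendstoD(1)) auto
  then show "eventually (\<lambda>u. a < - ln (sigma u) * T / (u * ln u)) at_top"
    using sigma_up_asym[OF e(1,2)] eventually_gt_at_top[of 1]
  proof eventually_elim
    case (elim u)
    have "0 < T / (u * ln u)" using elim T_gt by simp
    then have "((1-e)*u/T - 1) * ln (e*u/T) * (T / (u * ln u)) \<le> - ln (sigma u) * (T / (u * ln u))"
      using elim by (intro mult_right_mono) auto
    then show ?case using elim by simp
  qed
next
  fix a :: real assume a: "a > 1"
  define d where "d = (a - 1) * T / (2 * a)"
  have d: "0 < d" "d < T" unfolding d_def using a T_gt by (auto simp: field_simps add_pos_pos)
  have lt: "inverse (T - d) * T < a"
  proof -
    have "T < a * (T - d)" unfolding d_def using a T_gt by (simp add: field_simps)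
    then show ?thesis using d by (simp add: field_simps)
  qed
  obtain beta c where bc: "beta > 0" "c > 0"
    "eventually (\<lambda>s. - ln (sigma s) \<le> - ln beta + (s/(T-d) + 1) * ln ((s + (T-d))/c)) at_top"
    using sigma_lo_asym[OF d] by blast
  have "eventually (\<lambda>u. (- ln beta + (u/(T-d)+1) * ln ((u+(T-d))/c)) * T / (u * ln u) < a) at_top"
    using lim_lo[of "T - d" c T "- ln beta"] d bc T_gt lt by (intro order_tendstoD(2)) auto
  then show "eventually (\<lambda>u. - ln (sigma u) * T / (u * ln u) < a) at_top"
    using bc(3) eventually_gt_at_top[of 1]
  proof eventually_elim
    case (elim u)
    have "0 < T / (u * ln u)" using elim T_gt by simp
    then have "- ln (sigma u) * (T / (u * ln u)) \<le> (- ln beta + (u/(T-d)+1) * ln ((u+(T-d))/c)) * (T / (u * ln u))"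
      using elim by (intro mult_right_mono) auto
    then show ?case using elim by simp
  qed
qed

end

locale P3x = P3 +
  fixes xi :: "real \<Rightarrow> real"
  assumes xi_eq: "\<And>u. u > 0 \<Longrightarrow> u = (LINT v:{1..}|lborel. chi v * exp (xi u * v))"
begin

lemma I_int: "integrable lborel (\<lambda>v. indicator {1..} v * (chi v * exp (z * v)))"
proof (rule Bochner_Integration.integrable_bound[where f="\<lambda>v. indicator {1..T} v * exp (\<bar>z\<bar> * T)"])
  show "integrable lborel (\<lambda>v. indicator {1..T} v * exp (\<bar>z\<bar> * T))" by (rule int_ind')
  have "(\<lambda>v. (indicator {1..} v * chi v) * exp (z * v)) \<in> borel_measurable lborel"
    by (intro borel_measurable_times chi_meas_sub) auto
  then show "(\<lambda>v. indicator {1..} v * (chi v * exp (z * v))) \<in> borel_measurable lborel"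
    by (simp add: mult.assoc)
  show "AE v in lborel. norm (indicator {1..} v * (chi v * exp (z * v))) \<le> norm (indicator {1..T} v * exp (\<bar>z\<bar> * T))"
    using chi_ae_zero
  proof (elim AE_mp, intro AE_I2 impI)
    fix v assume z: "T \<le> v \<longrightarrow> chi v = 0"
    show "norm (indicator {1..} v * (chi v * exp (z * v))) \<le> norm (indicator {1..T} v * exp (\<bar>z\<bar> * T))"
    proof (cases "1 \<le> v \<and> v \<le> T")
      case True
      have c: "0 \<le> chi v" "chi v \<le> 1" using chi_nn[of v] True by auto
      have "z * v \<le> \<bar>z\<bar> * v" using True by (intro mult_right_mono) auto
      also have "\<dots> \<le> \<bar>z\<bar> * T" using True by (intro mult_left_mono) auto
      finally have "z * v \<le> \<bar>z\<bar> * T" .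
      then have e1: "exp (z * v) \<le> exp (\<bar>z\<bar> * T)" by simp
      have e2: "chi v * exp (z * v) \<le> exp (z * v)" using c by (simp add: mult_left_le_one_le)
      have e3: "chi v * exp (z * v) \<le> exp (\<bar>z\<bar> * T)" using e1 e2 by linarith
      show ?thesis using True c e3 by (simp add: indicator_def abs_mult)
    next
      case False
      then show ?thesis using z T_gt by (auto simp: indicator_def)
    qed
  qed
qed

lemma I_up: "(LINT v:{1..}|lborel. chi v * exp (z * v)) \<le> (T - 1) * exp (max z 0 * T)"
proof -
  have "(LINT v:{1..}|lborel. chi v * exp (z * v)) \<le> integral\<^sup>L lborel (\<lambda>v. indicator {1..T} v * exp (max z 0 * T))"
    unfolding LINT_def'
  proof (rule integral_mono_AE)
    show "integrable lborel (\<lambda>v. indicator {1..} v * (chi v * exp (z * v)))" by (rule I_int)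
    show "integrable lborel (\<lambda>v. indicator {1..T} v * exp (max z 0 * T))" by (rule int_ind')
    show "AE v in lborel. indicator {1..} v * (chi v * exp (z * v)) \<le> indicator {1..T} v * exp (max z 0 * T)"
      using chi_ae_zero
    proof (elim AE_mp, intro AE_I2 impI)
      fix v assume z: "T \<le> v \<longrightarrow> chi v = 0"
      show "indicator {1..} v * (chi v * exp (z * v)) \<le> indicator {1..T} v * exp (max z 0 * T)"
      proof (cases "1 \<le> v \<and> v \<le> T")
        case True
        have c: "0 \<le> chi v" "chi v \<le> 1" using chi_nn[of v] True by auto
        have "z * v \<le> max z 0 * T"
        proof -
          have "z * v \<le> max z 0 * v" using True by (intro mult_right_mono) auto
          also have "\<dots> \<le> max z 0 * T" using True by (intro mult_left_mono) auto
          finally show ?thesis .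
        qed
        then have e1: "exp (z * v) \<le> exp (max z 0 * T)" by simp
        have e2: "chi v * exp (z * v) \<le> exp (z * v)" using c by (simp add: mult_left_le_one_le)
        have e3: "chi v * exp (z * v) \<le> exp (max z 0 * T)" using e1 e2 by linarith
        show ?thesis using True c e3 by (simp add: indicator_def)
      next
        case False
        then show ?thesis using z T_gt by (auto simp: indicator_def)
      qed
    qed
  qed
  also have "\<dots> = (T - 1) * exp (max z 0 * T)" using T_gt by simp
  finally show ?thesis .
qed

lemma I_lo:
  assumes "1 \<le> a" "0 \<le> z"
  shows "(LINT t:{a..T}|lborel. chi t) * exp (z * a) \<le> (LINT v:{1..}|lborel. chi v * exp (z * v))"
proof -
  have "(LINT t:{a..T}|lborel. chi t) * exp (z * a) = integral\<^sup>L lborel (\<lambda>v. indicator {a..T} v * chi v * exp (z * a))"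
    unfolding LINT_def' by simp
  also have "\<dots> \<le> integral\<^sup>L lborel (\<lambda>v. indicator {1..} v * (chi v * exp (z * v)))"
  proof (rule integral_mono)
    show "integrable lborel (\<lambda>v. indicator {1..} v * (chi v * exp (z * v)))" by (rule I_int)
    show "integrable lborel (\<lambda>v. indicator {a..T} v * chi v * exp (z * a))"
      using chi_int[of a T] assms by (simp add: set_int_def')
    fix v show "indicator {a..T} v * chi v * exp (z * a) \<le> indicator {1..} v * (chi v * exp (z * v))"
    proof (cases "a \<le> v \<and> v \<le> T")
      case True
      have c: "0 \<le> chi v" using chi_nn[of v] True assms by auto
      have "z * a \<le> z * v" using True assms by (intro mult_left_mono) auto
      then have "chi v * exp (z * a) \<le> chi v * exp (z * v)" using c by (intro mult_left_mono) auto
      then show ?thesis using True assms by (simp add: indicator_def)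
    next
      case False
      have "0 \<le> indicator {1..} v * (chi v * exp (z * v))"
        using chi_nn[of v] by (auto simp: indicator_def)
      then show ?thesis using False chi_nn[of v] by (auto simp: indicator_def)
    qed
  qed
  also have "\<dots> = (LINT v:{1..}|lborel. chi v * exp (z * v))" unfolding LINT_def' by simp
  finally show ?thesis .
qed

lemma xi_pos_bound:
  assumes u: "u > T - 1" "u > 0"
  shows "xi u > 0 \<and> ln u \<le> ln (T - 1) + xi u * T"
proof -
  have ueq: "u \<le> (T - 1) * exp (max (xi u) 0 * T)" using xi_eq[OF u(2)] I_up[of "xi u"] by simp
  have xp: "xi u > 0"
  proof (rule ccontr)
    assume "\<not> xi u > 0"
    then have "max (xi u) 0 = 0" by simp
    then show False using ueq u by simp
  qed
  then have "u \<le> (T - 1) * exp (xi u * T)" using ueq by simp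
  then have "ln u \<le> ln ((T - 1) * exp (xi u * T))" using u T_gt by simp
  also have "\<dots> = ln (T - 1) + xi u * T" using T_gt by (simp add: ln_mult)
  finally show ?thesis using xp by simp
qed

lemma xi_limit: "((\<lambda>u. xi u * T / ln u) \<longlongrightarrow> 1) at_top"
proof (rule order_tendstoI)
  fix a :: real assume a: "a < 1"
  have "eventually (\<lambda>u. a < (ln u - ln (T - 1)) / ln u) at_top"
    using lim_xi1[of "ln (T - 1)"] a by (intro order_tendstoD(1)) auto
  then show "eventually (\<lambda>u. a < xi u * T / ln u) at_top"
    using eventually_gt_at_top[of "T"]
  proof eventually_elim
    case (elim u)
    have u1: "u > 1" using elim T_gt by simp
    have "ln u \<le> ln (T - 1) + xi u * T" using xi_pos_bound[of u] elim T_gt by simp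
    then have "(ln u - ln (T - 1)) / ln u \<le> xi u * T / ln u"
      using u1 by (intro divide_right_mono) auto
    then show ?case using elim by simp
  qed
next
  fix a :: real assume a: "a > 1"
  define d where "d = min ((T - 1)/2) ((a - 1) * T / (2 * a))"
  have d1: "0 < (a - 1) * T / (2 * a)" using a T_gt by simp
  have d: "0 < d" "d \<le> (T-1)/2" "d \<le> (a - 1) * T / (2 * a)" unfolding d_def using d1 T_gt
    by (auto simp: min_def)
  define b where "b = T - d"
  have b: "1 \<le> b" "b < T" "0 < b" unfolding b_def using d T_gt by auto
  have lt: "T / b < a"
  proof -
    have "a * d \<le> (a - 1) * T / 2" using d(3) a by (simp add: field_simps)
    then have h1: "a * d \<le> a * T / 2 - T / 2" by (simp add: algebra_simps)
    have h3: "a * b = a * T - a * d" unfolding b_def by (simp add: algebra_simps)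
    have h4: "a * T > 1 * T" using a T_gt by (intro mult_strict_right_mono) auto
    have "T < a * b" using h1 h3 h4 by linarith
    then show ?thesis using b by (simp add: field_simps)
  qed
  define c where "c = (LINT t:{b..T}|lborel. chi t)"
  have cpos: "c > 0" unfolding c_def using c_pos[of b] b by simp
  have lim: "((\<lambda>u. (ln u - ln c) / ln u * (T / b)) \<longlongrightarrow> 1 * (T / b)) at_top"
    by (intro tendsto_mult_right lim_xi1)
  have "eventually (\<lambda>u. (ln u - ln c) / ln u * (T / b) < a) at_top"
    using lim lt by (intro order_tendstoD(2)) auto
  then show "eventually (\<lambda>u. xi u * T / ln u < a) at_top"
    using eventually_gt_at_top[of "T"]
  proof eventually_elim
    case (elim u)
    have u1: "u > 1" using elim T_gt by simp
    have xp: "xi u > 0" using xi_pos_bound[of u] elim T_gt by simp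
    have "c * exp (xi u * b) \<le> u"
      using I_lo[of b "xi u"] b xp xi_eq[of u] u1 unfolding c_def by simp
    then have "ln (c * exp (xi u * b)) \<le> ln u" using cpos u1 by (subst ln_le_cancel_iff) auto
    then have "ln c + xi u * b \<le> ln u" using cpos by (simp add: ln_mult)
    then have "xi u \<le> (ln u - ln c) / b" using b by (simp add: field_simps)
    then have "xi u * T / ln u \<le> (ln u - ln c) / b * T / ln u"
      using u1 T_gt by (intro divide_right_mono mult_right_mono) auto
    also have "\<dots> = (ln u - ln c) / ln u * (T / b)" by simp
    finally show ?case using elim by simp
  qed
qed

end
theorem proposition3:
  fixes chi sigma xi :: "real \<Rightarrow> real" and T :: real
  assumes chi_meas: "set_borel_measurable lborel {0..} chi"
    and chi_one: "\<And>t. 0 \<le> t \<Longrightarrow> t \<le> 1 \<Longrightarrow> chi t = 1"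
    and chi_bounds: "\<And>t. t > 1 \<Longrightarrow> 0 \<le> chi t \<and> chi t \<le> 1"
    and T_gt: "T > 1"
    and T_zero: "(\<integral>\<^sup>+ s\<in>{T..}. ennreal (chi s) \<partial>lborel) = 0"
    and T_min: "\<And>t. 0 \<le> t \<Longrightarrow> (\<integral>\<^sup>+ s\<in>{t..}. ennreal (chi s) \<partial>lborel) = 0 \<Longrightarrow> T \<le> t"
    and sigma_init: "\<And>u. 0 \<le> u \<Longrightarrow> u \<le> 1 \<Longrightarrow> sigma u = 1"
    and sigma_int: "\<And>u. u > 1 \<Longrightarrow> set_integrable lborel {0..u} (\<lambda>t. sigma (u - t) * chi t)"
    and sigma_eq: "\<And>u. u > 1 \<Longrightarrow> u * sigma u = (LINT t:{0..u}|lborel. sigma (u - t) * chi t)"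
    and xi_eq: "\<And>u. u > 0 \<Longrightarrow> u = (LINT v:{1..}|lborel. chi v * exp (xi u * v))"
  shows "(\<exists>\<epsilon>. (\<epsilon> \<longlongrightarrow> 0) at_top \<and>
            (\<forall>\<^sub>F u in at_top. xi u = ln u / T * (1 + \<epsilon> u)))
       \<and> (\<exists>\<epsilon>. (\<epsilon> \<longlongrightarrow> 0) at_top \<and>
            (\<forall>\<^sub>F u in at_top. sigma u = exp (- (u * ln u / T) * (1 + \<epsilon> u))))"
proof -
  interpret P3x chi sigma T xi
    by (unfold_locales; fact)
  have A: "(\<exists>\<epsilon>. (\<epsilon> \<longlongrightarrow> 0) at_top \<and>
            (\<forall>\<^sub>F u in at_top. xi u = ln u / T * (1 + \<epsilon> u)))"
  proof (intro exI conjI)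
    show "((\<lambda>u. xi u * T / ln u - 1) \<longlongrightarrow> 0) at_top"
      using tendsto_diff[OF xi_limit tendsto_const[of 1]] by simp
    show "\<forall>\<^sub>F u in at_top. xi u = ln u / T * (1 + (xi u * T / ln u - 1))"
      using eventually_gt_at_top[of 1]
    proof eventually_elim
      case (elim u)
      then have "ln u > 0" by simp
      then show ?case using T_gt by (simp add: field_simps)
    qed
  qed
  have B: "(\<exists>\<epsilon>. (\<epsilon> \<longlongrightarrow> 0) at_top \<and>
            (\<forall>\<^sub>F u in at_top. sigma u = exp (- (u * ln u / T) * (1 + \<epsilon> u))))"
  proof (intro exI conjI)
    show "((\<lambda>u. - ln (sigma u) * T / (u * ln u) - 1) \<longlongrightarrow> 0) at_top"
      using tendsto_diff[OF sigma_limit tendsto_const[of 1]] by simp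
    show "\<forall>\<^sub>F u in at_top. sigma u = exp (- (u * ln u / T) * (1 + (- ln (sigma u) * T / (u * ln u) - 1)))"
      using eventually_gt_at_top[of 1]
    proof eventually_elim
      case (elim u)
      then have "ln u > 0" "u > 0" by simp_all
      then have "- (u * ln u / T) * (1 + (- ln (sigma u) * T / (u * ln u) - 1)) = ln (sigma u)"
        using T_gt by (simp add: field_simps)
      then show ?case using sigma_pos[of u] elim by simp
    qed
  qed
  show ?thesis using A B by blast
qed

end
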